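(* Let $m\ge 1$ and let $(a_1,b_1),\dots,(a_m,b_m)$ be pairs of non-negative integers with $(a_k,b_k)\neq(1,0)$ for every $k$. For $n\ge 1$ let $\mathcal{A}_n$ be the rational hyperplane arrangement in $\mathbb{R}^n$ consisting of the hyperplanes $x_i=x_j$ for $1\le i<j\le n$ together with the hyperplanes $x_i=a_kx_j+b_k$ for all $1\le i\neq j\le n$ and $1\le k\le m$. For a prime $q$, let $G_q$ be the simple graph with vertex set $\mathbb{Z}/q\mathbb{Z}=\{0,1,\dots,q-1\}$ in which two distinct vertices $u,v$ are adjacent if and only if $u\equiv a_kv+b_k \pmod q$ or $v\equiv a_ku+b_k\pmod q$ for some $1\le k\le m$. Then for every sufficiently large prime $q$, the number of $n$-element independent sets of $G_q$ equals $\chi_{\mathcal{A}_n}(q)/n!$.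
   Context: For a finite arrangement $\mathcal{A}$ of affine hyperplanes in $\mathbb{R}^n$, the characteristic polynomial is $\chi_{\mathcal{A}}(t)=\sum_{x\in L(\mathcal{A})}\mu(\hat 0,x)\,t^{\dim x}$, where $L(\mathcal{A})$ is the poset of all nonempty intersections of subsets of hyperplanes of $\mathcal{A}$ (including $\hat 0=\mathbb{R}^n$) ordered by reverse inclusion and $\mu$ is its Möbius function; equivalently $\chi_{\mathcal{A}}(t)=\sum_{\mathcal{B}}(-1)^{\#\mathcal{B}}t^{n-\operatorname{rank}(\mathcal{B})}$, the sum over subsets $\mathcal{B}\subseteq\mathcal{A}$ whose hyperplanes have nonempty common intersection, where $\operatorname{rank}(\mathcal{B})$ is the dimension of the span of the normal vectors of the hyperplanes in $\mathcal{B}$. An independent set of a graph is a set of vertices no two of which are adjacent. *)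

theory Defs
  imports "HOL-Analysis.Analysis" "HOL-Number_Theory.Cong" "HOL-Computational_Algebra.Primes"
begin

definition is_normal :: "(real^'n) set \<Rightarrow> real^'n \<Rightarrow> bool" where
  "is_normal H w \<longleftrightarrow> w \<noteq> 0 \<and> (\<exists>c. H = {x. w \<bullet> x = c})"

definition arr_rank :: "(real^'n) set set \<Rightarrow> nat" where
  "arr_rank B = dim {w. \<exists>H\<in>B. is_normal H w}"

definition char_poly :: "(real^'n) set set \<Rightarrow> real \<Rightarrow> real" where
  "char_poly A t = (\<Sum>B\<in>{B. B \<subseteq> A \<and> \<Inter>B \<noteq> {}}.
      (-1) ^ card B * t ^ (CARD('n) - arr_rank B))"

definition arr :: "(nat \<times> nat) list \<Rightarrow> (real^'n) set set" where
  "arr ps = {{x. x $ i = x $ j} | i j. i \<noteq> j}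
          \<union> {{x. x $ i = real a * x $ j + real b} | i j a b. i \<noteq> j \<and> (a, b) \<in> set ps}"

definition adj :: "(nat \<times> nat) list \<Rightarrow> nat \<Rightarrow> nat \<Rightarrow> nat \<Rightarrow> bool" where
  "adj ps q u v \<longleftrightarrow> u \<noteq> v \<and>
     (\<exists>(a, b)\<in>set ps. [u = a * v + b] (mod q) \<or> [v = a * u + b] (mod q))"

definition indep_sets :: "(nat \<times> nat) list \<Rightarrow> nat \<Rightarrow> nat \<Rightarrow> nat set set" where
  "indep_sets ps q n = {S. S \<subseteq> {0..<q} \<and> card S = n \<and>
      (\<forall>u\<in>S. \<forall>v\<in>S. \<not> adj ps q u v)}"

end

theory Submission
  imports Defs "HOL-Combinatorics.Permutations"
begin


definition lhsZ :: "('n::finite \<Rightarrow> int) \<Rightarrow> ('n \<Rightarrow> nat) \<Rightarrow> int" where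
  "lhsZ w y = (\<Sum>i\<in>UNIV. w i * int (y i))"

definition lhsR :: "('n::finite \<Rightarrow> int) \<Rightarrow> real^'n \<Rightarrow> real" where
  "lhsR w x = (\<Sum>i\<in>UNIV. real_of_int (w i) * x$i)"

definition solP :: "nat \<Rightarrow> 'n::finite set \<Rightarrow> (('n \<Rightarrow> int) \<times> int) list \<Rightarrow> ('n \<Rightarrow> nat) set" where
  "solP p J E = {y. (\<forall>i. y i < p) \<and> (\<forall>j\<in>J. y j = 0) \<and>
      (\<forall>(w,c)\<in>set E. [lhsZ w y = c] (mod int p))}"

definition solR :: "'n::finite set \<Rightarrow> (('n \<Rightarrow> int) \<times> int) list \<Rightarrow> (real^'n) set" where
  "solR J E = {x. (\<forall>j\<in>J. x$j = 0) \<and> (\<forall>(w,c)\<in>set E. lhsR w x = of_int c)}"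

definition zeroE :: "(('n \<Rightarrow> int) \<times> int) list \<Rightarrow> (('n \<Rightarrow> int) \<times> int) list" where
  "zeroE E = map (\<lambda>(w,c). (w,0)) E"

definition elim :: "'n \<Rightarrow> ('n \<Rightarrow> int) \<Rightarrow> int \<Rightarrow> ('n \<Rightarrow> int) \<times> int \<Rightarrow> ('n \<Rightarrow> int) \<times> int" where
  "elim i0 w c e = (\<lambda>i. w i0 * fst e i - fst e i0 * w i, w i0 * snd e - fst e i0 * c)"

definition updZ :: "('n \<Rightarrow> nat) \<Rightarrow> 'n \<Rightarrow> nat \<Rightarrow> 'n \<Rightarrow> nat" where
  "updZ y i0 t = y(i0 := t)"

definition updR :: "real^'n \<Rightarrow> 'n \<Rightarrow> real \<Rightarrow> real^'n" where
  "updR x i0 t = (\<chi> i. if i = i0 then t else x$i)"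

lemma lhsZ_upd: "lhsZ w (y(i0 := t)) = lhsZ w y + w i0 * (int t - int (y i0))"
proof -
  have "lhsZ w (y(i0 := t)) = (\<Sum>i\<in>UNIV. w i * int (y i) + (if i = i0 then w i0 * (int t - int (y i0)) else 0))"
    unfolding lhsZ_def by (intro sum.cong) (auto simp: algebra_simps)
  also have "\<dots> = lhsZ w y + w i0 * (int t - int (y i0))"
    by (simp add: sum.distrib lhsZ_def)
  finally show ?thesis .
qed

lemma lhsR_upd: "lhsR w (updR x i0 t) = lhsR w x + of_int (w i0) * (t - x$i0)"
proof -
  have "lhsR w (updR x i0 t) = (\<Sum>i\<in>UNIV. of_int (w i) * x$i + (if i = i0 then of_int (w i0) * (t - x$i0) else 0))"
    unfolding lhsR_def updR_def by (intro sum.cong) (auto simp: algebra_simps)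
  also have "\<dots> = lhsR w x + of_int (w i0) * (t - x$i0)"
    by (simp add: sum.distrib lhsR_def)
  finally show ?thesis .
qed

lemma lhsZ_elim: "lhsZ (fst (elim i0 w c e)) y = w i0 * lhsZ (fst e) y - fst e i0 * lhsZ w y"
  unfolding lhsZ_def elim_def
  by (simp add: sum_distrib_left sum_subtractf[symmetric] algebra_simps)

lemma lhsR_elim: "lhsR (fst (elim i0 w c e)) x = of_int (w i0) * lhsR (fst e) x - of_int (fst e i0) * lhsR w x"
  unfolding lhsR_def elim_def
  by (simp add: sum_distrib_left sum_subtractf[symmetric] algebra_simps)

lemma zeroE_elim: "zeroE (map (elim i0 w c) E) = map (elim i0 w 0) (zeroE E)"
  unfolding zeroE_def elim_def by auto

lemma elim_i0: "fst (elim i0 w c e) i0 = 0"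
  by (simp add: elim_def)

lemma updR_nth [simp]: "updR x i0 t $ i = (if i = i0 then t else x$i)"
  by (simp add: updR_def)

lemma lhsR_zero_coef: "w i0 = 0 \<Longrightarrow> lhsR w (updR x i0 t) = lhsR w x"
  by (simp add: lhsR_upd)

lemma lhsZ_zero_coef: "w i0 = 0 \<Longrightarrow> lhsZ w (y(i0 := t)) = lhsZ w y"
  by (simp add: lhsZ_upd)

lemma solR_step:
  assumes a: "w i0 \<noteq> 0" and J: "i0 \<notin> J"
  shows "(\<lambda>x. updR x i0 0) ` solR J ((w,c)#E') = solR (insert i0 J) (map (elim i0 w c) E')"
    and "inj_on (\<lambda>x. updR x i0 0) (solR J ((w,c)#E'))"
proof -
  show "(\<lambda>x. updR x i0 0) ` solR J ((w,c)#E') = solR (insert i0 J) (map (elim i0 w c) E')"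
  proof (intro set_eqI iffI)
    fix z assume "z \<in> (\<lambda>x. updR x i0 0) ` solR J ((w,c)#E')"
    then obtain x where x: "x \<in> solR J ((w,c)#E')" and z: "z = updR x i0 0" by auto
    show "z \<in> solR (insert i0 J) (map (elim i0 w c) E')"
      unfolding solR_def
    proof (intro CollectI conjI ballI)
      fix j assume "j \<in> insert i0 J" then show "z$j = 0" using x z by (auto simp: solR_def)
    next
      fix e assume "e \<in> set (map (elim i0 w c) E')"
      then obtain e' where e': "e' \<in> set E'" "e = elim i0 w c e'" by auto
      obtain w' c' where ee: "e' = (w',c')" by fastforce
      have h1: "lhsR w x = of_int c" "lhsR w' x = of_int c'" using x e' ee by (auto simp: solR_def)
      have "lhsR (fst e) z = lhsR (fst e) x" using z e' by (simp add: lhsR_zero_coef elim_i0)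
      also have "\<dots> = of_int (snd e)" using e' ee h1 by (simp add: lhsR_elim) (simp add: elim_def)
      finally show "case e of (w, c) \<Rightarrow> lhsR w z = real_of_int c" by (cases e) simp
    qed
  next
    fix z assume z: "z \<in> solR (insert i0 J) (map (elim i0 w c) E')"
    define t where "t = (of_int c - lhsR w z) / of_int (w i0)"
    define x where "x = updR z i0 t"
    have zi0: "z$i0 = 0" using z by (auto simp: solR_def)
    have lw: "lhsR w x = of_int c" unfolding x_def using a by (simp add: lhsR_upd zi0 t_def)
    have "x \<in> solR J ((w,c)#E')"
      unfolding solR_def
    proof (intro CollectI conjI ballI)
      fix j assume "j \<in> J" then show "x$j = 0" using z J by (auto simp: solR_def x_def)
    next
      fix e assume "e \<in> set ((w,c)#E')"
      then consider "e = (w,c)" | "e \<in> set E'" by auto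
      then show "case e of (w, c) \<Rightarrow> lhsR w x = real_of_int c"
      proof cases
        case 1 then show ?thesis using lw by simp
      next
        case 2
        obtain w' c' where ee: "e = (w',c')" by fastforce
        have "lhsR (fst (elim i0 w c e)) z = of_int (snd (elim i0 w c e))"
          using z 2 by (force simp: solR_def)
        moreover have "lhsR (fst (elim i0 w c e)) x = lhsR (fst (elim i0 w c e)) z"
          unfolding x_def by (simp add: lhsR_zero_coef elim_i0)
        ultimately have "of_int (w i0) * lhsR w' x - of_int (w' i0) * lhsR w x = of_int (snd (elim i0 w c e))"
          using lhsR_elim[of i0 w c e x] ee by simp
        also have "\<dots> = of_int (w i0 * c' - w' i0 * c)" by (simp add: ee elim_def)
        finally have "of_int (w i0) * lhsR w' x - of_int (w' i0) * lhsR w x = of_int (w i0 * c' - w' i0 * c)" .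
        then have "of_int (w i0) * lhsR w' x = of_int (w i0) * of_int c'" using lw by (simp add: algebra_simps)
        then show ?thesis using a ee by simp
      qed
    qed
    moreover have "z = updR x i0 0" unfolding x_def using zi0 by (simp add: vec_eq_iff)
    ultimately show "z \<in> (\<lambda>x. updR x i0 0) ` solR J ((w,c)#E')" by blast
  qed
  show "inj_on (\<lambda>x. updR x i0 0) (solR J ((w,c)#E'))"
  proof (rule inj_onI)
    fix x x' assume x: "x \<in> solR J ((w,c)#E')" and x': "x' \<in> solR J ((w,c)#E')"
      and eq: "updR x i0 0 = updR x' i0 0"
    have oth: "\<And>i. i \<noteq> i0 \<Longrightarrow> x$i = x'$i" using eq by (metis updR_nth)
    have xx: "x' = updR x i0 (x'$i0)" using oth by (auto simp: vec_eq_iff)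
    have "lhsR w x = of_int c" "lhsR w x' = of_int c" using x x' by (auto simp: solR_def)
    then have "of_int (w i0) * (x'$i0 - x$i0) = 0" using lhsR_upd[of w x i0 "x'$i0"] xx by simp
    then have "x'$i0 = x$i0" using a by simp
    then show "x = x'" using oth by (metis vec_eq_iff)
  qed
qed


lemma solP_step:
  assumes cop: "coprime (w i0) (int p)" and p: "p > 0" and J: "i0 \<notin> J"
  shows "(\<lambda>y. y(i0 := 0)) ` solP p J ((w,c)#E') = solP p (insert i0 J) (map (elim i0 w c) E')"
    and "inj_on (\<lambda>y. y(i0 := 0)) (solP p J ((w,c)#E'))"
proof -
  show "(\<lambda>y. y(i0 := 0)) ` solP p J ((w,c)#E') = solP p (insert i0 J) (map (elim i0 w c) E')"
  proof (intro set_eqI iffI)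
    fix z assume "z \<in> (\<lambda>y. y(i0 := 0)) ` solP p J ((w,c)#E')"
    then obtain x where x: "x \<in> solP p J ((w,c)#E')" and z: "z = x(i0 := 0)" by auto
    show "z \<in> solP p (insert i0 J) (map (elim i0 w c) E')"
      unfolding solP_def
    proof (intro CollectI conjI ballI allI)
      fix i show "z i < p" using x z p by (auto simp: solP_def)
    next
      fix j assume "j \<in> insert i0 J" then show "z j = 0" using x z by (auto simp: solP_def)
    next
      fix e assume "e \<in> set (map (elim i0 w c) E')"
      then obtain e' where e': "e' \<in> set E'" "e = elim i0 w c e'" by auto
      obtain w' c' where ee: "e' = (w',c')" by fastforce
      have h1: "[lhsZ w x = c] (mod int p)" "[lhsZ w' x = c'] (mod int p)" using x e' ee by (auto simp: solP_def)
      have "lhsZ (fst e) z = lhsZ (fst e) x" using z e' by (simp add: lhsZ_zero_coef elim_i0)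
      also have "\<dots> = w i0 * lhsZ w' x - w' i0 * lhsZ w x" using e' ee by (simp add: lhsZ_elim)
      finally have "[lhsZ (fst e) z = w i0 * c' - w' i0 * c] (mod int p)"
        using h1 by (metis cong_diff cong_mult cong_refl)
      then show "case e of (w, c) \<Rightarrow> [lhsZ w z = c] (mod int p)" using e' ee by (cases e) (simp add: elim_def)
    qed
  next
    fix z assume z: "z \<in> solP p (insert i0 J) (map (elim i0 w c) E')"
    obtain u where u: "[w i0 * u = 1] (mod int p)" using cong_solve_coprime_int[OF cop] by blast
    define t where "t = nat ((u * (c - lhsZ w z)) mod int p)"
    have tlt: "t < p" using p unfolding t_def by (simp add: nat_less_iff)
    have tcong: "[int t = u * (c - lhsZ w z)] (mod int p)" unfolding t_def using p
      by (simp add: cong_def)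
    define x where "x = z(i0 := t)"
    have zi0: "z i0 = 0" using z by (auto simp: solP_def)
    have "lhsZ w x = lhsZ w z + w i0 * int t" unfolding x_def by (simp add: lhsZ_upd zi0)
    moreover have "[lhsZ w z + w i0 * int t = lhsZ w z + (w i0 * u) * (c - lhsZ w z)] (mod int p)"
      using tcong by (metis cong_add cong_mult cong_refl mult.assoc)
    moreover have "[lhsZ w z + (w i0 * u) * (c - lhsZ w z) = lhsZ w z + 1 * (c - lhsZ w z)] (mod int p)"
      using u by (metis cong_add cong_mult cong_refl)
    ultimately have lw: "[lhsZ w x = c] (mod int p)" by (metis cong_trans diff_add_cancel mult_1 add.commute)
    have "x \<in> solP p J ((w,c)#E')"
      unfolding solP_def
    proof (intro CollectI conjI ballI allI)
      fix i show "x i < p" using z tlt by (auto simp: solP_def x_def)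
    next
      fix j assume "j \<in> J" then show "x j = 0" using z J by (auto simp: solP_def x_def)
    next
      fix e assume "e \<in> set ((w,c)#E')"
      then consider "e = (w,c)" | "e \<in> set E'" by auto
      then show "case e of (w, c) \<Rightarrow> [lhsZ w x = c] (mod int p)"
      proof cases
        case 1 then show ?thesis using lw by simp
      next
        case 2
        obtain w' c' where ee: "e = (w',c')" by fastforce
        have "[lhsZ (fst (elim i0 w c e)) z = snd (elim i0 w c e)] (mod int p)"
          using z 2 by (force simp: solP_def)
        moreover have "lhsZ (fst (elim i0 w c e)) x = lhsZ (fst (elim i0 w c e)) z"
          unfolding x_def by (simp add: lhsZ_zero_coef elim_i0)
        ultimately have "[w i0 * lhsZ w' x - w' i0 * lhsZ w x = snd (elim i0 w c e)] (mod int p)"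
          using lhsZ_elim[of i0 w c e x] ee by simp
        also have "snd (elim i0 w c e) = w i0 * c' - w' i0 * c" by (simp add: ee elim_def)
        finally have h: "[w i0 * lhsZ w' x - w' i0 * lhsZ w x = w i0 * c' - w' i0 * c] (mod int p)" .
        have h2: "[w' i0 * lhsZ w x = w' i0 * c] (mod int p)" using lw by (simp add: cong_mult)
        have "[w i0 * lhsZ w' x = w i0 * c'] (mod int p)"
          using cong_add[OF h h2] by simp
        then show ?thesis using cop ee by (simp add: cong_mult_lcancel)
      qed
    qed
    moreover have "z = x(i0 := 0)" unfolding x_def using zi0 by auto
    ultimately show "z \<in> (\<lambda>y. y(i0 := 0)) ` solP p J ((w,c)#E')" by blast
  qed
  show "inj_on (\<lambda>y. y(i0 := 0)) (solP p J ((w,c)#E'))"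
  proof (rule inj_onI)
    fix x x' assume x: "x \<in> solP p J ((w,c)#E')" and x': "x' \<in> solP p J ((w,c)#E')"
      and eq: "x(i0 := 0) = x'(i0 := 0)"
    have oth: "\<And>i. i \<noteq> i0 \<Longrightarrow> x i = x' i" using eq by (metis fun_upd_other)
    have xx: "x' = x(i0 := x' i0)" using oth by auto
    have "[lhsZ w x = c] (mod int p)" "[lhsZ w x' = c] (mod int p)" using x x' by (auto simp: solP_def)
    then have "[lhsZ w x' = lhsZ w x] (mod int p)" by (metis cong_sym cong_trans)
    then have "[lhsZ w x + w i0 * (int (x' i0) - int (x i0)) = lhsZ w x + 0] (mod int p)"
      using lhsZ_upd[of w x i0 "x' i0"] xx by simp
    then have "[w i0 * (int (x' i0) - int (x i0)) = 0] (mod int p)"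
      by (metis cong_add_lcancel add_0_right)
    then have "[int (x' i0) - int (x i0) = 0] (mod int p)" using cong_mult_lcancel[OF cop, of "int (x' i0) - int (x i0)" 0] by simp
    then have "[int (x' i0) = int (x i0)] (mod int p)" by (simp add: cong_diff_iff_cong_0)
    moreover have "x i0 < p" "x' i0 < p" using x x' by (auto simp: solP_def)
    ultimately have "x' i0 = x i0" by (metis cong_int_iff cong_less_modulus_unique_nat)
    then show "x = x'" using oth by (metis ext)
  qed
qed




definition kerR :: "'n::finite set \<Rightarrow> (('n \<Rightarrow> int) \<times> int) list \<Rightarrow> (real^'n) set" where
  "kerR J E = solR J (zeroE E)"

lemma kerR_alt: "kerR J E = {x. (\<forall>j\<in>J. x$j = 0) \<and> (\<forall>e\<in>set E. lhsR (fst e) x = 0)}"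
  unfolding kerR_def solR_def zeroE_def by auto

lemma lhsR_add: "lhsR w (x + y) = lhsR w x + lhsR w y"
  by (simp add: lhsR_def sum.distrib algebra_simps)

lemma lhsR_scale: "lhsR w (r *\<^sub>R x) = r * lhsR w x"
  by (simp add: lhsR_def sum_distrib_left algebra_simps)

lemma lhsR_0: "lhsR w 0 = 0"
  by (simp add: lhsR_def)

lemma subspace_kerR: "subspace (kerR J E)"
  unfolding subspace_def kerR_alt
  by (auto simp: lhsR_add lhsR_scale lhsR_0)

lemma linear_updR: "linear (\<lambda>x. updR x i0 0)"
  by (rule linearI) (auto simp: vec_eq_iff)

lemma kerR_step:
  assumes a: "w i0 \<noteq> 0" and J: "i0 \<notin> J"
  shows "dim (kerR J ((w,c)#E')) = dim (kerR (insert i0 J) (map (elim i0 w c) E'))"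
proof -
  have z: "zeroE ((w,c)#E') = (w,0) # zeroE E'" by (simp add: zeroE_def)
  have "kerR (insert i0 J) (map (elim i0 w c) E') = (\<lambda>x. updR x i0 0) ` kerR J ((w,c)#E')"
    unfolding kerR_def z zeroE_elim using solR_step(1)[of w i0 J 0 "zeroE E'"] a J by simp
  moreover have sp: "span (kerR J ((w,c)#E')) = kerR J ((w,c)#E')"
    using subspace_kerR[of J "(w,c)#E'"] span_eq_iff by blast
  moreover have inj: "inj_on (\<lambda>x. updR x i0 0) (kerR J ((w,c)#E'))"
    using solR_step(2)[of w i0 J 0 "zeroE E'"] a J by (simp add: kerR_def z)
  have "dim ((\<lambda>x. updR x i0 0) ` kerR J ((w,c)#E')) = dim (kerR J ((w,c)#E'))"
    using eucl.dim_image_eq[OF linear_updR, of i0 "kerR J ((w,c)#E')"] inj sp by metis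
  ultimately show ?thesis by simp
qed

lemma count_main:
  fixes E :: "(('n::finite \<Rightarrow> int) \<times> int) list"
  assumes "\<forall>(w,c)\<in>set E. \<forall>j\<in>J. w j = 0"
  shows "\<exists>p0. \<forall>p. prime p \<and> p \<ge> p0 \<longrightarrow>
    card (solP p J E) = (if solR J E = {} then 0 else p ^ dim (kerR J E))"
  using assms
proof (induction "length E" arbitrary: E J rule: less_induct)
  case less
  show ?case
  proof (cases E)
    case Nil
    have "\<forall>p. prime p \<and> p \<ge> 0 \<longrightarrow>
      card (solP p J E) = (if solR J E = {} then 0 else p ^ dim (kerR J E))"
    proof (intro allI impI)
      fix p :: nat
      assume "prime p \<and> p \<ge> 0"
      then have pp: "p > 0" by (simp add: prime_gt_0_nat)
      have sp: "solP p J E = (\<Pi>\<^sub>E i\<in>UNIV. if i \<in> J then {0} else {0..<p})"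
        using Nil pp by (auto simp: solP_def PiE_def Pi_def extensional_def split: if_splits)
      have "card (solP p J E) = (\<Prod>i\<in>UNIV. card (if i \<in> J then {0} else {0..<p}))"
        unfolding sp by (simp add: card_PiE)
      also have "\<dots> = (\<Prod>i\<in>UNIV. if i \<in> J then 1 else p)"
        by (intro prod.cong) auto
      also have "\<dots> = p ^ card (- J)"
        by (simp add: prod.If_cases Compl_eq_Diff_UNIV)
      finally have c1: "card (solP p J E) = p ^ card (- J)" .
      have "kerR J E = {x. \<forall>i. i \<notin> - J \<longrightarrow> x$i = 0}"
        using Nil by (auto simp: kerR_def solR_def zeroE_def)
      then have "dim (kerR J E) = card (- J)"
        using dim_substandard_cart[of "- J", where 'a=real] by (simp add: dim_vec_eq)
      moreover have "0 \<in> solR J E" using Nil by (simp add: solR_def)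
      ultimately show "card (solP p J E) = (if solR J E = {} then 0 else p ^ dim (kerR J E))"
        using c1 by auto
    qed
    then show ?thesis by blast
  next
    case (Cons e E')
    obtain w c where e: "e = (w,c)" by fastforce
    show ?thesis
    proof (cases "\<forall>i. w i = 0")
      case True
      have lz: "lhsZ w y = 0" for y using True by (simp add: lhsZ_def)
      have lr: "lhsR w x = 0" for x using True by (simp add: lhsR_def)
      show ?thesis
      proof (cases "c = 0")
        case True
        have "solP p J E = solP p J E'" for p using Cons e True lz by (auto simp: solP_def)
        moreover have "solR J E = solR J E'" using Cons e True lr by (auto simp: solR_def)
        moreover have "kerR J E = kerR J E'" using Cons e lr by (auto simp: kerR_def solR_def zeroE_def)
        moreover obtain p0 where "\<forall>p. prime p \<and> p \<ge> p0 \<longrightarrow>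
          card (solP p J E') = (if solR J E' = {} then 0 else p ^ dim (kerR J E'))"
          using less(1)[of E' J] less(2) Cons by auto
        ultimately show ?thesis by metis
      next
        case False
        have "solR J E = {}" using Cons e False lr by (auto simp: solR_def)
        moreover have "solP p J E = {}" if "prime p" "p \<ge> nat \<bar>c\<bar> + 1" for p
        proof (rule ccontr)
          assume "solP p J E \<noteq> {}"
          then obtain y where "y \<in> solP p J E" by auto
          then have "[0 = c] (mod int p)" using Cons e lz by (auto simp: solP_def)
          then have "int p dvd c" by (metis cong_0_iff cong_sym)
          then have "int p \<le> \<bar>c\<bar>" using False dvd_imp_le_int[of c "int p"] by simp
          then show False using that by linarith
        qed
        ultimately show ?thesis by (intro exI[of _ "nat \<bar>c\<bar> + 1"]) auto
      qed
    next
      case False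
      then obtain i0 where a: "w i0 \<noteq> 0" by auto
      have J: "i0 \<notin> J" using less(2) Cons e a by auto
      define E2 where "E2 = map (elim i0 w c) E'"
      have h2: "\<forall>(w',c')\<in>set E2. \<forall>j\<in>insert i0 J. w' j = 0"
        using less(2) Cons e by (auto simp: E2_def elim_def)
      obtain p0 where p0: "\<forall>p. prime p \<and> p \<ge> p0 \<longrightarrow>
          card (solP p (insert i0 J) E2) = (if solR (insert i0 J) E2 = {} then 0 else p ^ dim (kerR (insert i0 J) E2))"
        using less(1)[of E2 "insert i0 J"] h2 Cons by (auto simp: E2_def)
      have sR: "solR J E = {} \<longleftrightarrow> solR (insert i0 J) E2 = {}"
        using solR_step(1)[of w i0 J c E'] a J Cons e by (auto simp: E2_def)
      have kR: "dim (kerR J E) = dim (kerR (insert i0 J) E2)"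
        using kerR_step[of w i0 J c E'] a J Cons e by (simp add: E2_def)
      have "card (solP p J E) = card (solP p (insert i0 J) E2)" if p: "prime p" "p \<ge> nat \<bar>w i0\<bar> + 1" for p
      proof -
        have "\<not> int p dvd w i0" using a p by (auto dest: dvd_imp_le_int)
        then have "coprime (int p) (w i0)" using p by (intro prime_imp_coprime) auto
        then have cop: "coprime (w i0) (int p)" by (simp add: coprime_commute)
        have pp: "p > 0" using p by (simp add: prime_gt_0_nat)
        show ?thesis
          using solP_step[of w i0 p J c E'] cop pp J Cons e card_image by (metis E2_def)
      qed
      then show ?thesis using p0 sR kR
        by (intro exI[of _ "max p0 (nat \<bar>w i0\<bar> + 1)"]) auto
    qed
  qed
qed



lemma hyp_prop:
  fixes u v :: "'a::real_inner"
  assumes u: "u \<noteq> 0" and H: "{x. u \<bullet> x = c} = {x. v \<bullet> x = d}"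
  shows "v = (v \<bullet> u / (u \<bullet> u)) *\<^sub>R u \<and> d = (v \<bullet> u / (u \<bullet> u)) * c"
proof -
  define r where "r = v \<bullet> u / (u \<bullet> u)"
  define x0 where "x0 = (c / (u \<bullet> u)) *\<^sub>R u"
  define z where "z = v - r *\<^sub>R u"
  have uu: "u \<bullet> u \<noteq> 0" using u by simp
  have "u \<bullet> x0 = c" using uu by (simp add: x0_def)
  then have d: "v \<bullet> x0 = d" using H by blast
  have "u \<bullet> z = u \<bullet> v - r * (u \<bullet> u)" by (simp add: z_def inner_diff_right)
  also have "\<dots> = 0" using uu by (simp add: r_def inner_commute)
  finally have uz: "u \<bullet> z = 0" .
  have "u \<bullet> (x0 + z) = c" using \<open>u \<bullet> x0 = c\<close> uz by (simp add: inner_add_right)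
  then have "v \<bullet> (x0 + z) = d" using H by blast
  then have vz: "v \<bullet> z = 0" using d by (simp add: inner_add_right)
  have "z \<bullet> z = v \<bullet> z - r * (u \<bullet> z)" unfolding z_def by (simp add: inner_diff_left inner_commute)
  then have "z = 0" using vz uz by simp
  then have v: "v = r *\<^sub>R u" by (simp add: z_def)
  have "d = r * (u \<bullet> x0)" using d v by simp
  then have "d = r * c" using \<open>u \<bullet> x0 = c\<close> by simp
  then show ?thesis using v unfolding r_def by blast
qed

definition vecw :: "('n::finite \<Rightarrow> int) \<Rightarrow> real^'n" where
  "vecw w = (\<chi> i. real_of_int (w i))"

lemma lhsR_inner: "lhsR w x = vecw w \<bullet> x"
  by (simp add: lhsR_def vecw_def inner_vec_def)

lemma kerR_0: "y \<in> kerR {} E \<longleftrightarrow> (\<forall>e\<in>set E. lhsR (fst e) y = 0)"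
  by (simp add: kerR_alt)

lemma kerR_orth: "y \<in> kerR {} E \<longleftrightarrow> (\<forall>x\<in>(\<lambda>e. vecw (fst e)) ` set E. orthogonal x y)"
  unfolding kerR_0 lhsR_inner orthogonal_def by simp

lemma dim_kerR:
  fixes E :: "(('n::finite \<Rightarrow> int) \<times> int) list"
  shows "dim (kerR {} E) + dim ((\<lambda>e. vecw (fst e)) ` set E) = CARD('n)"
proof -
  let ?V = "(\<lambda>e. vecw (fst e)) ` set E"
  note k1 = kerR_orth[of _ E]
  have sp: "(\<forall>x\<in>?V. orthogonal x y) \<longleftrightarrow> (\<forall>x\<in>span ?V. orthogonal x y)" for y
  proof
    assume yo: "\<forall>x\<in>?V. orthogonal x y"
    show "\<forall>x\<in>span ?V. orthogonal x y"
    proof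
      fix x assume x: "x \<in> span ?V"
      have "\<And>z. z \<in> ?V \<Longrightarrow> orthogonal y z" using yo orthogonal_commute by metis
      then have "orthogonal y x" using orthogonal_to_span[OF x] by metis
      then show "orthogonal x y" using orthogonal_commute by metis
    qed
  next
    assume "\<forall>x\<in>span ?V. orthogonal x y"
    then show "\<forall>x\<in>?V. orthogonal x y" using span_base by metis
  qed
  have "kerR {} E = {y \<in> UNIV. \<forall>x\<in>span ?V. orthogonal x y}"
    using k1 sp by auto
  moreover have "dim {y \<in> UNIV. \<forall>x\<in>span ?V. orthogonal x y} + dim (span ?V) = dim (UNIV :: (real^'n) set)"
    by (rule dim_subspace_orthogonal_to_vectors) auto
  ultimately show ?thesis by (simp add: dim_span)
qed

lemma incl_excl:
  fixes f :: "'i \<Rightarrow> 'a set"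
  assumes "finite A" "finite U"
  shows "int (card (U - (\<Union>a\<in>A. f a))) =
    (\<Sum>B\<in>Pow A. (-1) ^ card B * int (card {y\<in>U. \<forall>a\<in>B. y \<in> f a}))"
  using assms
proof (induction A arbitrary: U rule: finite_induct)
  case empty
  then show ?case by simp
next
  case (insert a A)
  have e1: "U - (\<Union>x\<in>insert a A. f x) = (U - (\<Union>x\<in>A. f x)) - ((U \<inter> f a) - (\<Union>x\<in>A. f x))"
    by auto
  have "int (card (U - (\<Union>x\<in>insert a A. f x))) =
      int (card (U - (\<Union>x\<in>A. f x))) - int (card ((U \<inter> f a) - (\<Union>x\<in>A. f x)))"
  proof -
    have "card ((U \<inter> f a) - (\<Union>x\<in>A. f x)) \<le> card (U - (\<Union>x\<in>A. f x))"
      using insert.prems by (intro card_mono) auto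
    then show ?thesis
      unfolding e1 using insert.prems by (subst card_Diff_subset) (auto simp: of_nat_diff)
  qed
  also have "\<dots> = (\<Sum>B\<in>Pow A. (-1) ^ card B * int (card {y\<in>U. \<forall>a\<in>B. y \<in> f a}))
      - (\<Sum>B\<in>Pow A. (-1) ^ card B * int (card {y\<in>U \<inter> f a. \<forall>a\<in>B. y \<in> f a}))"
    using insert by simp
  also have "(\<Sum>B\<in>Pow A. (-1) ^ card B * int (card {y\<in>U \<inter> f a. \<forall>a\<in>B. y \<in> f a}))
      = - (\<Sum>B\<in>insert a ` Pow A. (-1) ^ card B * int (card {y\<in>U. \<forall>a\<in>B. y \<in> f a}))"
  proof -
    have inj: "inj_on (insert a) (Pow A)" using insert.hyps
      by (intro inj_onI) (metis Pow_iff insert_ident subsetD)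
    have "(\<Sum>B\<in>insert a ` Pow A. (-1) ^ card B * int (card {y\<in>U. \<forall>a\<in>B. y \<in> f a}))
       = (\<Sum>B\<in>Pow A. (-1) ^ card (insert a B) * int (card {y\<in>U. \<forall>b\<in>insert a B. y \<in> f b}))"
      using inj by (simp add: sum.reindex)
    also have "\<dots> = (\<Sum>B\<in>Pow A. - ((-1) ^ card B * int (card {y\<in>U \<inter> f a. \<forall>a\<in>B. y \<in> f a})))"
    proof (intro sum.cong refl)
      fix B assume B: "B \<in> Pow A"
      then have "finite B" "a \<notin> B" using insert.hyps finite_subset by auto
      moreover have "{y\<in>U. \<forall>b\<in>insert a B. y \<in> f b} = {y\<in>U \<inter> f a. \<forall>a\<in>B. y \<in> f a}" by auto
      ultimately show "(-1) ^ card (insert a B) * int (card {y\<in>U. \<forall>b\<in>insert a B. y \<in> f b})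
          = - ((-1) ^ card B * int (card {y\<in>U \<inter> f a. \<forall>a\<in>B. y \<in> f a}))" by simp
    qed
    finally show ?thesis by (simp add: sum_negf)
  qed
  also have "(\<Sum>B\<in>Pow A. (-1) ^ card B * int (card {y\<in>U. \<forall>a\<in>B. y \<in> f a})) -
      - (\<Sum>B\<in>insert a ` Pow A. (-1) ^ card B * int (card {y\<in>U. \<forall>a\<in>B. y \<in> f a}))
      = (\<Sum>B\<in>Pow (insert a A). (-1) ^ card B * int (card {y\<in>U. \<forall>a\<in>B. y \<in> f a}))"
  proof -
    have "Pow A \<inter> insert a ` Pow A = {}" using insert.hyps by auto
    then show ?thesis unfolding Pow_insert using insert.hyps
      by (subst sum.union_disjoint) auto
  qed
  finally show ?case .
qed

lemma card_fiber:
  fixes S :: "'b set"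
  assumes "finite S" "card S = CARD('n::finite)"
  shows "card {y::'n \<Rightarrow> 'b. inj y \<and> range y = S} = fact CARD('n)"
proof -
  obtain h :: "'n \<Rightarrow> 'b" where h: "bij_betw h UNIV S"
    using finite_same_card_bij[of "UNIV :: 'n set" S] assms by auto
  have hinj: "inj h" and hr: "range h = S" using h by (auto simp: bij_betw_def)
  have img: "(\<lambda>\<sigma>. h \<circ> \<sigma>) ` {\<sigma>. \<sigma> permutes (UNIV :: 'n set)} = {y::'n \<Rightarrow> 'b. inj y \<and> range y = S}"
  proof (intro set_eqI iffI)
    fix y assume "y \<in> (\<lambda>\<sigma>. h \<circ> \<sigma>) ` {\<sigma>. \<sigma> permutes (UNIV :: 'n set)}"
    then obtain \<sigma> where s: "\<sigma> permutes UNIV" "y = h \<circ> \<sigma>" by auto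
    then have "bij \<sigma>" by (simp add: permutes_bij)
    have "range y = h ` range \<sigma>" using s by (simp add: image_comp)
    then have "range y = S" using \<open>bij \<sigma>\<close> hr by (simp add: bij_def)
    moreover have "inj y" using s hinj \<open>bij \<sigma>\<close> by (simp add: bij_def inj_compose)
    ultimately show "y \<in> {y. inj y \<and> range y = S}" by simp
  next
    fix y :: "'n \<Rightarrow> 'b" assume y: "y \<in> {y. inj y \<and> range y = S}"
    define \<sigma> where "\<sigma> = inv h \<circ> y"
    have yr: "y x \<in> range h" for x using y hr by auto
    have hs: "h \<circ> \<sigma> = y" using yr by (simp add: \<sigma>_def fun_eq_iff f_inv_into_f)
    have "inj \<sigma>"
    proof (rule injI)
      fix a b assume "\<sigma> a = \<sigma> b"
      then have "y a = y b" using hs by (metis comp_apply)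
      then show "a = b" using y by (auto dest: injD)
    qed
    moreover have "surj \<sigma>"
    proof -
      have "z \<in> range \<sigma>" for z
      proof -
        have "h z \<in> range y" using y hr by auto
        then obtain x where "h z = y x" by auto
        then have "\<sigma> x = z" unfolding \<sigma>_def using hinj by (metis comp_apply inv_f_f)
        then show ?thesis by auto
      qed
      then show ?thesis by auto
    qed
    ultimately have "bij \<sigma>" by (simp add: bij_def)
    then have "\<sigma> permutes UNIV" by (rule bij_imp_permutes) simp
    then show "y \<in> (\<lambda>\<sigma>. h \<circ> \<sigma>) ` {\<sigma>. \<sigma> permutes (UNIV :: 'n set)}"
      using hs by (intro rev_image_eqI[of \<sigma>]) auto
  qed
  have inj: "inj_on (\<lambda>\<sigma>. h \<circ> \<sigma>) {\<sigma>. \<sigma> permutes (UNIV :: 'n set)}"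
  proof (rule inj_onI)
    fix s1 s2 :: "'n \<Rightarrow> 'n" assume "h \<circ> s1 = h \<circ> s2"
    then have "h (s1 x) = h (s2 x)" for x by (metis comp_apply)
    then show "s1 = s2" using hinj by (auto dest: injD)
  qed
  have "card {y::'n \<Rightarrow> 'b. inj y \<and> range y = S} = card {\<sigma>. \<sigma> permutes (UNIV :: 'n set)}"
    using card_image[OF inj] img by simp
  also have "\<dots> = fact CARD('n)" by (rule card_permutations) auto
  finally show ?thesis .
qed



definition Rset :: "(nat \<times> nat) list \<Rightarrow> ('n::finite \<times> 'n \<times> nat \<times> nat) set" where
  "Rset ps = {(i,j,a,b). i \<noteq> j \<and> (a,b) \<in> insert (1,0) (set ps)}"

definition hyp :: "'n::finite \<times> 'n \<times> nat \<times> nat \<Rightarrow> (real^'n) set" where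
  "hyp r = (case r of (i,j,a,b) \<Rightarrow> {x. x$i = real a * x$j + real b})"

definition eqn :: "'n::finite \<times> 'n \<times> nat \<times> nat \<Rightarrow> ('n \<Rightarrow> int) \<times> int" where
  "eqn r = (case r of (i,j,a,b) \<Rightarrow>
     (\<lambda>k. (if k = i then 1 else 0) - (if k = j then int a else 0), int b))"

lemma finite_Rset: "finite (Rset ps)"
proof -
  have "Rset ps \<subseteq> UNIV \<times> UNIV \<times> insert (1,0) (set ps)"
    by (auto simp: Rset_def)
  then show ?thesis by (rule finite_subset) auto
qed

lemma arr_eq: "arr ps = hyp ` Rset ps"
proof (intro set_eqI iffI)
  fix H :: "(real^'n) set" assume "H \<in> arr ps"
  then consider i j where "i \<noteq> j" "H = {x. x $ i = x $ j}"
    | i j a b where "i \<noteq> j" "(a,b) \<in> set ps" "H = {x. x $ i = real a * x $ j + real b}"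
    unfolding arr_def by blast
  then show "H \<in> hyp ` Rset ps"
  proof cases
    case 1
    then have "H = hyp (i,j,1,0)" by (simp add: hyp_def)
    moreover have "(i,j,1,0) \<in> Rset ps" using 1 by (simp add: Rset_def)
    ultimately show ?thesis by blast
  next
    case 2
    then have "H = hyp (i,j,a,b)" by (simp add: hyp_def)
    moreover have "(i,j,a,b) \<in> Rset ps" using 2 by (simp add: Rset_def)
    ultimately show ?thesis by blast
  qed
next
  fix H :: "(real^'n) set" assume "H \<in> hyp ` Rset ps"
  then obtain i j a b where r: "i \<noteq> j" "(a,b) \<in> insert (1,0) (set ps)" "H = hyp (i,j,a,b)"
    by (auto simp: Rset_def)
  show "H \<in> arr ps"
  proof (cases "(a,b) = (1,0)")
    case True
    then have "H = {x. x $ i = x $ j}" using r by (simp add: hyp_def)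
    then show ?thesis using r unfolding arr_def by blast
  next
    case False
    then have "(a,b) \<in> set ps" using r(2) by auto
    moreover have "H = {x. x $ i = real a * x $ j + real b}" using r by (simp add: hyp_def)
    ultimately show ?thesis using r unfolding arr_def by blast
  qed
qed

lemma finite_arr: "finite (arr ps :: (real^'n::finite) set set)"
  unfolding arr_eq by (intro finite_imageI finite_Rset)

lemma lhsR_eqn:
  assumes "i \<noteq> j"
  shows "lhsR (fst (eqn (i,j,a,b))) x = x$i - real a * x$j"
proof -
  have "lhsR (fst (eqn (i,j,a,b))) x =
    (\<Sum>k\<in>UNIV. (if k = i then x$i else 0) - (if k = j then real a * x$j else 0))"
    unfolding lhsR_def eqn_def using assms by (intro sum.cong) auto
  then show ?thesis by (simp add: sum_subtractf)
qed

lemma lhsZ_eqn: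
  assumes "i \<noteq> j"
  shows "lhsZ (fst (eqn (i,j,a,b))) y = int (y i) - int a * int (y j)"
proof -
  have "lhsZ (fst (eqn (i,j,a,b))) y =
    (\<Sum>k\<in>UNIV. (if k = i then int (y i) else 0) - (if k = j then int a * int (y j) else 0))"
    unfolding lhsZ_def eqn_def using assms by (intro sum.cong) auto
  then show ?thesis by (simp add: sum_subtractf)
qed

lemma hyp_eqn:
  assumes "r \<in> Rset ps"
  shows "hyp r = {x. lhsR (fst (eqn r)) x = of_int (snd (eqn r))}"
proof -
  obtain i j a b where r: "r = (i,j,a,b)" "i \<noteq> j" using assms by (auto simp: Rset_def)
  have s: "snd (eqn (i,j,a,b)) = int b" by (simp add: eqn_def)
  show ?thesis using r by (auto simp: lhsR_eqn[OF r(2)] hyp_def s)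
qed

lemma eqn_snd: "snd (eqn (i,j,a,b)) = int b"
  by (simp add: eqn_def)

lemma modsat:
  assumes "i \<noteq> j"
  shows "[lhsZ (fst (eqn (i,j,a,b))) y = snd (eqn (i,j,a,b))] (mod int q) \<longleftrightarrow>
         [y i = a * y j + b] (mod q)"
proof -
  have "[y i = a * y j + b] (mod q) \<longleftrightarrow> [int (y i) = int (a * y j + b)] (mod int q)"
    by (simp only: cong_int_iff)
  also have "\<dots> \<longleftrightarrow> int q dvd (int (y i) - (int a * int (y j) + int b))"
    by (simp add: cong_iff_dvd_diff)
  also have "\<dots> \<longleftrightarrow> int q dvd ((int (y i) - int a * int (y j)) - int b)"
    by (simp add: algebra_simps)
  also have "\<dots> \<longleftrightarrow> [lhsZ (fst (eqn (i,j,a,b))) y = snd (eqn (i,j,a,b))] (mod int q)"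
    using assms by (simp add: cong_iff_dvd_diff lhsZ_eqn[OF assms] eqn_snd)
  finally show ?thesis by simp
qed

lemma vecw_eqn_nz:
  assumes "r \<in> Rset ps"
  shows "vecw (fst (eqn r)) \<noteq> 0"
proof -
  obtain i j a b where r: "r = (i,j,a,b)" "i \<noteq> j" using assms by (auto simp: Rset_def)
  have "vecw (fst (eqn r)) $ i = 1" using r by (simp add: vecw_def eqn_def)
  then show ?thesis by auto
qed

lemma hyp_inner:
  assumes "r \<in> Rset ps"
  shows "hyp r = {x. vecw (fst (eqn r)) \<bullet> x = of_int (snd (eqn r))}"
  using hyp_eqn[OF assms] by (simp add: lhsR_inner)

lemma uniq:
  assumes r: "r \<in> Rset ps" and r': "r' \<in> Rset ps" and h: "hyp r = hyp r'"
    and sat: "[lhsZ (fst (eqn r)) y = snd (eqn r)] (mod m)"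
  shows "[lhsZ (fst (eqn r')) y = snd (eqn r')] (mod m)"
proof -
  obtain i j a b where ri: "r = (i,j,a,b)" "i \<noteq> j" using r by (auto simp: Rset_def)
  obtain w c where wc: "eqn r = (w,c)" by fastforce
  obtain w' c' where wc': "eqn r' = (w',c')" by fastforce
  have wi: "w i = 1" using ri wc by (auto simp: eqn_def)
  have "{x. vecw w \<bullet> x = of_int c} = {x. vecw w' \<bullet> x = of_int c'}"
    using hyp_inner[OF r] hyp_inner[OF r'] h wc wc' by simp
  moreover have nz: "vecw w \<noteq> 0" using vecw_eqn_nz[OF r] wc by simp
  ultimately obtain l where l: "vecw w' = l *\<^sub>R vecw w" "of_int c' = l * of_int c"
    using hyp_prop[OF nz] by blast
  have lk: "real_of_int (w' k) = l * real_of_int (w k)" for k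
    using arg_cong[OF l(1), of "\<lambda>v. v $ k"] by (simp add: vecw_def)
  have li: "l = real_of_int (w' i)" using lk[of i] wi by simp
  have wk: "w' k = w' i * w k" for k
  proof -
    have "real_of_int (w' k) = real_of_int (w' i * w k)" using lk[of k] lk[of i] wi by simp
    then show ?thesis by (simp only: of_int_eq_iff)
  qed
  have cc: "c' = w' i * c"
  proof -
    have "real_of_int c' = real_of_int (w' i * c)" using l(2) lk[of i] wi by simp
    then show ?thesis by (simp only: of_int_eq_iff)
  qed
  have "lhsZ w' y = (\<Sum>k\<in>UNIV. w' i * (w k * int (y k)))"
    unfolding lhsZ_def
  proof (rule sum.cong[OF refl])
    fix k show "w' k * int (y k) = w' i * (w k * int (y k))" using wk[of k] by (simp add: mult.assoc)
  qed
  also have "\<dots> = w' i * lhsZ w y" by (simp add: lhsZ_def sum_distrib_left)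
  finally have "lhsZ w' y = w' i * lhsZ w y" .
  moreover have "[w' i * lhsZ w y = w' i * c] (mod m)"
    using sat wc by (simp add: cong_scalar_left)
  ultimately show ?thesis using wc' cc by simp
qed



definition rep :: "(nat \<times> nat) list \<Rightarrow> (real^'n::finite) set \<Rightarrow> 'n \<times> 'n \<times> nat \<times> nat" where
  "rep ps H = (SOME r. r \<in> Rset ps \<and> hyp r = H)"

lemma rep_spec:
  assumes "H \<in> arr ps"
  shows "rep ps H \<in> Rset ps \<and> hyp (rep ps H) = H"
proof -
  have "H \<in> hyp ` Rset ps" using assms by (simp add: arr_eq)
  then have "\<exists>r. r \<in> Rset ps \<and> hyp r = H" by blast
  then show ?thesis unfolding rep_def by (rule someI_ex)
qed

definition fH :: "nat \<Rightarrow> (nat \<times> nat) list \<Rightarrow> (real^'n::finite) set \<Rightarrow> ('n \<Rightarrow> nat) set" where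
  "fH q ps H = {y. (\<forall>i. y i < q) \<and> [lhsZ (fst (eqn (rep ps H))) y = snd (eqn (rep ps H))] (mod int q)}"

definition Tset :: "nat \<Rightarrow> (nat \<times> nat) list \<Rightarrow> ('n::finite \<Rightarrow> nat) set" where
  "Tset q ps = {y. (\<forall>i. y i < q) \<and> inj y \<and>
     (\<forall>i j. i \<noteq> j \<longrightarrow> (\<forall>(a,b)\<in>set ps. \<not> [y i = a * y j + b] (mod q)))}"

lemma in_fH:
  assumes r: "r \<in> Rset ps" and y: "\<forall>i. y i < q"
    and sat: "[lhsZ (fst (eqn r)) y = snd (eqn r)] (mod int q)"
  shows "y \<in> fH q ps (hyp r)"
proof -
  have H: "hyp r \<in> arr ps" using r by (simp add: arr_eq)
  have "[lhsZ (fst (eqn (rep ps (hyp r)))) y = snd (eqn (rep ps (hyp r)))] (mod int q)"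
    using uniq[OF r _ _ sat] rep_spec[OF H] by metis
  then show ?thesis using y by (simp add: fH_def)
qed

lemma Tset_rel:
  assumes y: "y \<in> Tset q ps" and ij: "i \<noteq> j" and ab: "(a,b) \<in> set ps"
  shows "\<not> [y i = a * y j + b] (mod q)"
proof -
  have "\<forall>i j. i \<noteq> j \<longrightarrow> (\<forall>(a,b)\<in>set ps. \<not> [y i = a * y j + b] (mod q))"
    using y by (simp add: Tset_def)
  then have "\<forall>(a,b)\<in>set ps. \<not> [y i = a * y j + b] (mod q)" using ij by blast
  then have "case (a,b) of (a,b) \<Rightarrow> \<not> [y i = a * y j + b] (mod q)" using ab by (rule bspec)
  then show ?thesis by simp
qed

lemma Tset_intro:
  fixes y :: "'n::finite \<Rightarrow> nat"
  assumes "\<forall>i. y i < q" "inj y"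
    and rel: "\<And>i j a b. i \<noteq> j \<Longrightarrow> (a,b) \<in> set ps \<Longrightarrow> \<not> [y i = a * y j + b] (mod q)"
  shows "y \<in> Tset q ps"
proof -
  have "\<forall>i j. i \<noteq> j \<longrightarrow> (\<forall>(a,b)\<in>set ps. \<not> [y i = a * y j + b] (mod q))"
  proof (intro allI impI ballI)
    fix i j :: 'n and x assume "i \<noteq> j" "x \<in> set ps"
    then show "case x of (a,b) \<Rightarrow> \<not> [y i = a * y j + b] (mod q)" using rel by (cases x) simp
  qed
  then show ?thesis using assms(1,2) by (simp add: Tset_def)
qed

lemma Tset_eq:
  "Tset q ps = {y. \<forall>i. y i < q} - (\<Union>H\<in>arr ps. fH q ps H)"
proof (intro set_eqI iffI)
  fix y :: "'a \<Rightarrow> nat" assume y: "y \<in> Tset q ps"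
  have "y \<notin> fH q ps H" if H: "H \<in> arr ps" for H
  proof
    assume yf: "y \<in> fH q ps H"
    obtain i j a b where r: "rep ps H = (i,j,a,b)" "i \<noteq> j" "(a,b) \<in> insert (1,0) (set ps)"
      using rep_spec[OF H] by (auto simp: Rset_def)
    have "[lhsZ (fst (eqn (i,j,a,b))) y = snd (eqn (i,j,a,b))] (mod int q)"
      using yf r(1) by (simp add: fH_def)
    then have "[y i = a * y j + b] (mod q)" by (subst (asm) modsat[OF r(2)])
    then have c: "[y i = a * y j + b] (mod q)" .
    have lt: "y i < q" "y j < q" using y by (auto simp: Tset_def)
    have inj: "inj y" using y by (simp add: Tset_def)
    show False
    proof (cases "(a,b) = (1,0)")
      case True
      then have "[y i = y j] (mod q)" using c by simp
      then have "y i = y j" using lt cong_less_modulus_unique_nat by blast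
      then show False using inj r(2) by (auto dest: injD)
    next
      case False
      then have "(a,b) \<in> set ps" using r(3) by auto
      then show False using Tset_rel[OF y r(2)] c by blast
    qed
  qed
  then show "y \<in> {y. \<forall>i. y i < q} - (\<Union>H\<in>arr ps. fH q ps H)" using y by (auto simp: Tset_def)
next
  fix y :: "'a \<Rightarrow> nat" assume y: "y \<in> {y. \<forall>i. y i < q} - (\<Union>H\<in>arr ps. fH q ps H)"
  have box: "\<forall>i. y i < q" using y by simp
  have nf: "y \<notin> fH q ps (hyp r)" if "r \<in> Rset ps" for r
  proof -
    have "hyp r \<in> arr ps" using that by (simp add: arr_eq)
    then show ?thesis using y by blast
  qed
  have "inj y"
  proof (rule injI)
    fix i j assume e: "y i = y j"
    show "i = j"
    proof (rule ccontr)
      assume ij: "i \<noteq> j"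
      have r: "(i,j,1,0) \<in> Rset ps" using ij by (simp add: Rset_def)
      have "[lhsZ (fst (eqn (i,j,1,0))) y = snd (eqn (i,j,1::nat,0::nat))] (mod int q)"
        by (subst modsat[OF ij]) (simp add: e)
      then have "y \<in> fH q ps (hyp (i,j,1,0))" by (rule in_fH[OF r box])
      then show False using nf r by blast
    qed
  qed
  moreover have "\<not> [y i = a * y j + b] (mod q)" if "i \<noteq> j" "(a,b) \<in> set ps" for i j a b
  proof
    assume c: "[y i = a * y j + b] (mod q)"
    have r: "(i,j,a,b) \<in> Rset ps" using that by (simp add: Rset_def)
    have "[lhsZ (fst (eqn (i,j,a,b))) y = snd (eqn (i,j,a,b))] (mod int q)"
      by (subst modsat[OF that(1)]) (rule c)
    then have "y \<in> fH q ps (hyp (i,j,a,b))" by (rule in_fH[OF r box])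
    then show False using nf r by blast
  qed
  ultimately show "y \<in> Tset q ps" using box by (intro Tset_intro) auto
qed

lemma Tset_indep:
  "Tset q ps = {y::'n::finite \<Rightarrow> nat. inj y \<and> range y \<in> indep_sets ps q CARD('n)}"
proof (intro set_eqI iffI)
  fix y :: "'n \<Rightarrow> nat" assume y: "y \<in> Tset q ps"
  have inj: "inj y" using y by (simp add: Tset_def)
  have "range y \<subseteq> {0..<q}" using y by (auto simp: Tset_def)
  moreover have "card (range y) = CARD('n)" using inj by (simp add: card_image)
  moreover have "\<not> adj ps q u v" if uv: "u \<in> range y" "v \<in> range y" for u v
  proof
    assume a: "adj ps q u v"
    obtain i j where ij: "u = y i" "v = y j" using uv by blast
    have ij': "i \<noteq> j" using a ij by (auto simp: adj_def)
    from a ij obtain a' b' where ab: "(a',b') \<in> set ps"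
      "[y i = a' * y j + b'] (mod q) \<or> [y j = a' * y i + b'] (mod q)"
      by (auto simp: adj_def)
    then show False using Tset_rel[OF y ij' ab(1)] Tset_rel[OF y ij'[symmetric] ab(1)] by blast
  qed
  ultimately show "y \<in> {y. inj y \<and> range y \<in> indep_sets ps q CARD('n)}"
    using inj by (auto simp: indep_sets_def)
next
  fix y :: "'n \<Rightarrow> nat" assume y: "y \<in> {y. inj y \<and> range y \<in> indep_sets ps q CARD('n)}"
  then have inj: "inj y" and I: "range y \<in> indep_sets ps q CARD('n)" by auto
  have "range y \<subseteq> {0..<q}" using I by (simp add: indep_sets_def)
  then have box: "\<forall>i. y i < q" by (simp add: image_subset_iff)
  have "\<not> [y i = a * y j + b] (mod q)" if "i \<noteq> j" "(a,b) \<in> set ps" for i j a b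
  proof
    assume c: "[y i = a * y j + b] (mod q)"
    have "y i \<noteq> y j" using inj that(1) by (auto dest: injD)
    then have "adj ps q (y i) (y j)" using c that(2) by (auto simp: adj_def)
    then show False using I by (auto simp: indep_sets_def)
  qed
  then show "y \<in> Tset q ps" using inj box by (intro Tset_intro) auto
qed

lemma finite_box: "finite {y::'n::finite \<Rightarrow> nat. \<forall>i. y i < q}"
proof -
  have "{y::'n \<Rightarrow> nat. \<forall>i. y i < q} = (\<Pi>\<^sub>E i\<in>UNIV. {..<q})"
    by (auto simp: PiE_def Pi_def extensional_def)
  then show ?thesis by (simp add: finite_PiE)
qed

lemma card_Tset:
  "card (Tset q ps :: ('n::finite \<Rightarrow> nat) set) = card (indep_sets ps q CARD('n)) * fact CARD('n)"
proof -
  let ?I = "indep_sets ps q CARD('n)"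
  let ?F = "\<lambda>S. {y::'n \<Rightarrow> nat. inj y \<and> range y = S}"
  have "?I \<subseteq> Pow {0..<q}" by (auto simp: indep_sets_def)
  then have fI: "finite ?I" by (rule finite_subset) simp
  have eq: "Tset q ps = (\<Union>S\<in>?I. ?F S)"
    unfolding Tset_indep by blast
  have fin: "finite (?F S)" if "S \<in> ?I" for S
  proof -
    have "S \<subseteq> {0..<q}" using that by (simp add: indep_sets_def)
    then have "?F S \<subseteq> {y. \<forall>i. y i < q}" by (auto simp: image_subset_iff)
    then show ?thesis using finite_box by (rule finite_subset)
  qed
  have disj: "\<forall>A\<in>?I. \<forall>B\<in>?I. A \<noteq> B \<longrightarrow> ?F A \<inter> ?F B = {}" by blast
  have "card (Tset q ps :: ('n \<Rightarrow> nat) set) = (\<Sum>S\<in>?I. card (?F S))"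
    unfolding eq using card_UN_disjoint[OF fI _ disj] fin by blast
  also have "\<dots> = (\<Sum>S\<in>?I. fact CARD('n))"
  proof (rule sum.cong[OF refl])
    fix S assume S: "S \<in> ?I"
    then have sub: "S \<subseteq> {0..<q}" and cS: "card S = CARD('n)" by (auto simp: indep_sets_def)
    have "finite S" using sub by (rule finite_subset) simp
    then show "card (?F S) = fact CARD('n)" using cS by (rule card_fiber)
  qed
  finally show ?thesis by simp
qed



definition eqs :: "(nat \<times> nat) list \<Rightarrow> (real^'n::finite) set set \<Rightarrow> (('n \<Rightarrow> int) \<times> int) list" where
  "eqs ps B = (SOME L. set L = (\<lambda>H. eqn (rep ps H)) ` B)"

lemma set_eqs:
  assumes "finite B"
  shows "set (eqs ps B) = (\<lambda>H. eqn (rep ps H)) ` B"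
proof -
  have "\<exists>L. set L = (\<lambda>H. eqn (rep ps H)) ` B" using assms by (intro finite_list) simp
  then show ?thesis unfolding eqs_def by (rule someI_ex)
qed

lemma inter_eq:
  assumes B: "B \<subseteq> arr ps"
  shows "{y \<in> {y. \<forall>i. y i < q}. \<forall>H\<in>B. y \<in> fH q ps H} = solP q {} (eqs ps B)"
proof -
  have fB: "finite B" using B finite_arr finite_subset by blast
  have "(\<forall>(w,c)\<in>set (eqs ps B). [lhsZ w y = c] (mod int q)) \<longleftrightarrow>
    (\<forall>H\<in>B. [lhsZ (fst (eqn (rep ps H))) y = snd (eqn (rep ps H))] (mod int q))" for y
    unfolding set_eqs[OF fB] by (simp add: case_prod_beta)
  then show ?thesis unfolding solP_def fH_def by blast
qed

lemma mem_arr_hyp: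
  assumes "H \<in> arr ps"
  shows "x \<in> H \<longleftrightarrow> lhsR (fst (eqn (rep ps H))) x = of_int (snd (eqn (rep ps H)))"
proof -
  have r: "rep ps H \<in> Rset ps" and h: "hyp (rep ps H) = H" using rep_spec[OF assms] by auto
  show ?thesis using hyp_eqn[OF r] h by blast
qed

lemma solR_eq:
  assumes B: "B \<subseteq> arr ps"
  shows "solR {} (eqs ps B) = \<Inter>B"
proof -
  have fB: "finite B" using B finite_arr finite_subset by blast
  have "x \<in> solR {} (eqs ps B) \<longleftrightarrow> (\<forall>H\<in>B. x \<in> H)" for x
  proof -
    have "x \<in> solR {} (eqs ps B) \<longleftrightarrow>
      (\<forall>H\<in>B. lhsR (fst (eqn (rep ps H))) x = of_int (snd (eqn (rep ps H))))"
      by (auto simp: solR_def set_eqs[OF fB] case_prod_beta)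
    also have "\<dots> \<longleftrightarrow> (\<forall>H\<in>B. x \<in> H)" using B mem_arr_hyp by blast
    finally show ?thesis .
  qed
  then show ?thesis by blast
qed

lemma rank_eq:
  fixes B :: "(real^'n::finite) set set"
  assumes B: "B \<subseteq> arr ps"
  shows "arr_rank B = dim ((\<lambda>e. vecw (fst e)) ` set (eqs ps B))"
proof -
  have fB: "finite B" using B finite_arr finite_subset by blast
  define u :: "(real^'n) set \<Rightarrow> real^'n" where "u H = vecw (fst (eqn (rep ps H)))" for H
  define cc :: "(real^'n) set \<Rightarrow> real" where "cc H = real_of_int (snd (eqn (rep ps H)))" for H
  let ?V = "u ` B"
  let ?N = "{w. \<exists>H\<in>B. is_normal H w}"
  have V: "(\<lambda>e. vecw (fst e)) ` set (eqs ps B) = ?V"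
    unfolding set_eqs[OF fB] u_def by (simp add: image_image)
  have info1: "u H \<noteq> 0" if "H \<in> B" for H
  proof -
    have H: "H \<in> arr ps" using that B by blast
    then have r: "rep ps H \<in> Rset ps" using rep_spec by blast
    show ?thesis unfolding u_def by (rule vecw_eqn_nz[OF r])
  qed
  have info2: "H = {x. u H \<bullet> x = cc H}" if "H \<in> B" for H
  proof -
    have H: "H \<in> arr ps" using that B by blast
    then have r: "rep ps H \<in> Rset ps" and h: "hyp (rep ps H) = H" using rep_spec by blast+
    show ?thesis unfolding u_def cc_def by (rule trans[OF sym[OF h] hyp_inner[OF r]])
  qed
  have VN: "?V \<subseteq> ?N"
  proof
    fix v assume "v \<in> ?V"
    then obtain H where H: "H \<in> B" and v: "v = u H" by blast
    have "is_normal H (u H)" unfolding is_normal_def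
    proof (rule conjI[OF info1[OF H]])
      show "\<exists>c. H = {x. u H \<bullet> x = c}" by (rule exI[of _ "cc H"]) (rule info2[OF H])
    qed
    then show "v \<in> ?N" using H v by blast
  qed
  have NV: "?N \<subseteq> span ?V"
  proof
    fix w assume "w \<in> ?N"
    then obtain H where H: "H \<in> B" and nw: "is_normal H w" by blast
    then obtain c0 where c0: "H = {x. w \<bullet> x = c0}" unfolding is_normal_def by blast
    have "{x. u H \<bullet> x = cc H} = {x. w \<bullet> x = c0}"
      using trans[OF sym[OF info2[OF H]] c0] .
    then have "\<exists>r. w = r *\<^sub>R u H" using hyp_prop[OF info1[OF H]] by blast
    then obtain r where wr: "w = r *\<^sub>R u H" by blast
    have "u H \<in> span ?V" using H by (intro span_base) blast
    then have "r *\<^sub>R u H \<in> span ?V" by (rule span_scale)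
    then show "w \<in> span ?V" unfolding wr .
  qed
  have a1: "?N \<subseteq> span ?V" by (rule NV)
  have a2: "?V \<subseteq> span ?N" by (rule subset_trans[OF VN span_superset])
  have sp: "span ?N = span ?V" using iffD2[OF span_eq] a1 a2 by blast
  have "dim ?N = dim (span ?N)" by (rule dim_span[symmetric])
  also have "\<dots> = dim (span ?V)" unfolding sp ..
  also have "\<dots> = dim ?V" by (rule dim_span)
  finally have "dim ?N = dim ?V" .
  then show ?thesis unfolding arr_rank_def V .
qed

lemma uniform:
  assumes "finite X" "\<forall>x\<in>X. \<exists>p0::nat. \<forall>p\<ge>p0. Q x p"
  shows "\<exists>p0. \<forall>x\<in>X. \<forall>p\<ge>p0. Q x p"
  using assms
proof (induction X rule: finite_induct)
  case empty
  then show ?case by simp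
next
  case (insert a X)
  then obtain p1 where p1: "\<forall>x\<in>X. \<forall>p\<ge>p1. Q x p" by auto
  obtain p2 where p2: "\<forall>p\<ge>p2. Q a p" using insert.prems by auto
  show ?case using p1 p2 by (intro exI[of _ "max p1 p2"]) auto
qed

lemma count_B:
  fixes B :: "(real^'n::finite) set set"
  assumes B: "B \<subseteq> arr ps" and q: "prime q"
    and cm: "card (solP q {} (eqs ps B)) =
      (if solR {} (eqs ps B) = {} then 0 else q ^ dim (kerR {} (eqs ps B)))"
  shows "card {y \<in> {y. \<forall>i. y i < q}. \<forall>H\<in>B. y \<in> fH q ps H} =
    (if \<Inter>B = {} then 0 else q ^ (CARD('n) - arr_rank B))"
proof -
  have d: "dim (kerR {} (eqs ps B)) = CARD('n) - arr_rank B"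
    using dim_kerR[of "eqs ps B"] rank_eq[OF B] by simp
  show ?thesis unfolding inter_eq[OF B] cm solR_eq[OF B] d ..
qed

theorem proposition1p4:
  fixes ps :: "(nat \<times> nat) list"
  assumes "ps \<noteq> []"
    and "\<forall>p\<in>set ps. p \<noteq> (1, 0)"
  shows "\<exists>q0. \<forall>q. prime q \<and> q \<ge> q0 \<longrightarrow>
     real (card (indep_sets ps q CARD('n)))
       = char_poly (arr ps :: (real^'n) set set) (real q) / fact CARD('n)"
proof -
  let ?A = "arr ps :: (real^'n) set set"
  let ?n = "CARD('n)"
  have fA: "finite ?A" by (rule finite_arr)
  have allB: "\<forall>B\<in>Pow ?A. \<exists>p0::nat. \<forall>p\<ge>p0. prime p \<longrightarrow> card (solP p {} (eqs ps B)) =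
      (if solR {} (eqs ps B) = {} then 0 else p ^ dim (kerR {} (eqs ps B)))"
  proof
    fix B assume "B \<in> Pow ?A"
    obtain p0 where "\<forall>p. prime p \<and> p \<ge> p0 \<longrightarrow> card (solP p {} (eqs ps B)) =
      (if solR {} (eqs ps B) = {} then 0 else p ^ dim (kerR {} (eqs ps B)))"
      using count_main[of "eqs ps B" "{}"] by auto
    then show "\<exists>p0::nat. \<forall>p\<ge>p0. prime p \<longrightarrow> card (solP p {} (eqs ps B)) =
      (if solR {} (eqs ps B) = {} then 0 else p ^ dim (kerR {} (eqs ps B)))" by blast
  qed
  obtain q0 where q0: "\<forall>B\<in>Pow ?A. \<forall>p\<ge>q0. prime p \<longrightarrow> card (solP p {} (eqs ps B)) =
      (if solR {} (eqs ps B) = {} then 0 else p ^ dim (kerR {} (eqs ps B)))"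
    using uniform[OF finite_Pow_iff[THEN iffD2, OF fA] allB] by blast
  show ?thesis
  proof (intro exI[of _ q0] allI impI)
    fix q :: nat assume qq: "prime q \<and> q \<ge> q0"
    define C :: "(real^'n) set set \<Rightarrow> nat" where "C B = card {y \<in> {y. \<forall>i. y i < q}. \<forall>H\<in>B. y \<in> fH q ps H}" for B
    have Ceq: "C B = (if \<Inter>B = {} then 0 else q ^ (?n - arr_rank B))" if "B \<in> Pow ?A" for B
    proof -
      have sub: "B \<subseteq> ?A" using that by simp
      have cm: "card (solP q {} (eqs ps B)) =
          (if solR {} (eqs ps B) = {} then 0 else q ^ dim (kerR {} (eqs ps B)))"
        using q0[rule_format, OF that, of q] qq by blast
      have pq: "prime q" using qq by blast
      show ?thesis unfolding C_def by (rule count_B[OF sub pq cm])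
    qed
    have "int (card (Tset q ps :: ('n \<Rightarrow> nat) set)) =
        (\<Sum>B\<in>Pow ?A. (-1) ^ card B * int (C B))"
      unfolding Tset_eq C_def by (rule incl_excl[OF fA finite_box])
    note h = this
    have "real (card (Tset q ps :: ('n \<Rightarrow> nat) set)) =
        of_int (\<Sum>B\<in>Pow ?A. (-1) ^ card B * int (C B))"
      unfolding h[symmetric] by simp
    also have "\<dots> = (\<Sum>B\<in>Pow ?A. (-1) ^ card B * real (C B))"
      by (simp add: of_int_sum)
    also have "\<dots> = (\<Sum>B\<in>Pow ?A. if \<Inter>B \<noteq> {} then (-1) ^ card B * real q ^ (?n - arr_rank B) else 0)"
      by (rule sum.cong[OF refl]) (simp add: Ceq)
    also have "\<dots> = (\<Sum>B\<in>{B \<in> Pow ?A. \<Inter>B \<noteq> {}}. (-1) ^ card B * real q ^ (?n - arr_rank B))"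
      by (rule sum.inter_filter[symmetric]) (simp add: fA)
    also have "{B \<in> Pow ?A. \<Inter>B \<noteq> {}} = {B. B \<subseteq> ?A \<and> \<Inter>B \<noteq> {}}" by blast
    also have "(\<Sum>B\<in>{B. B \<subseteq> ?A \<and> \<Inter>B \<noteq> {}}. (-1) ^ card B * real q ^ (?n - arr_rank B))
        = char_poly ?A (real q)"
      unfolding char_poly_def ..
    finally have "real (card (indep_sets ps q ?n)) * fact ?n = char_poly ?A (real q)"
      unfolding card_Tset by simp
    then show "real (card (indep_sets ps q ?n)) = char_poly ?A (real q) / fact ?n"
      by (simp add: eq_divide_eq)
  qed
qed


end
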